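(* Let $\mathcal O$ be a non-degenerate conic of $\mathrm{PG}(2,q^2)$ and $\bar L\in\ell_\infty$ a point not on $\mathcal O$. Then in $\mathrm{PG}(4,q^2)$ the extended spread line $[L]^\star$ is disjoint from $[\mathcal O]^\star=\mathcal Q_\infty^\star\cap\mathcal Q_0^\star$.
   Context: Bruck–Bose setting with coordinates: $\tau$ primitive in $\mathbb F_{q^2}$ with minimal polynomial $x^2-t_1x-t_0$ over $\mathbb F_q$; $\ell_\infty: z=0$ in $\mathrm{PG}(2,q^2)$; $\Sigma_\infty: z=0$ in $\mathrm{PG}(4,q)$ with coordinates $(x_0,x_1,y_0,y_1,z)$. The affine point $(x_0+x_1\tau,y_0+y_1\tau,z)$ maps to $(x_0,x_1,y_0,y_1,z)$, and $\bar T=(\delta,1,0)\in\ell_\infty$, $\delta=d_0+d_1\tau$, to the spread line $[T]=\langle(d_0,d_1,1,0,0),(t_0d_1,d_0+t_1d_1,0,1,0)\rangle$ (and $(1,0,0)$ to $\langle(1,0,0,0,0),(0,1,0,0,0)\rangle$). If $\mathcal O$ has equation $f(x,y,z)=0$, substituting $x=x_0+x_1\tau$, $y=y_0+y_1\tau$ and reducing with $\tau^2=t_1\tau+t_0$ gives $f=f_\infty+\tau f_0$ with $f_\infty,f_0$ homogeneous quadratics over $\mathbb F_q$; $\mathcal Q_\infty,\mathcal Q_0$ are the quadrics $f_\infty=0$, $f_0=0$ of $\mathrm{PG}(4,q)$, and $\mathcal V^\star$ denotes the set of points of $\mathrm{PG}(4,q^2)$ satisfying the equations defining $\mathcal V$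 (for a line, its extension to a line of $\mathrm{PG}(4,q^2)$). *)

theory Defs
  imports Main
begin

type_synonym 'k conic = "'k \<times> 'k \<times> 'k \<times> 'k \<times> 'k \<times> 'k"

definition conic_eval :: "'k::field conic \<Rightarrow> 'k \<Rightarrow> 'k \<Rightarrow> 'k \<Rightarrow> 'k" where
  "conic_eval C x y z = (case C of (a,b,c,d,e,g) \<Rightarrow>
     a*x^2 + b*y^2 + c*z^2 + d*x*y + e*x*z + g*y*z)"

definition nondegenerate_conic :: "'k::field conic \<Rightarrow> bool" where
  "nondegenerate_conic C = (case C of (a,b,c,d,e,g) \<Rightarrow>
     \<not> (\<exists>x y z. (x,y,z) \<noteq> (0,0,0) \<and> conic_eval C x y z = 0 \<and>
          2*a*x + d*y + e*z = 0 \<and> 2*b*y + d*x + g*z = 0 \<and> 2*c*z + e*x + g*y = 0))"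

definition is_subfield :: "'k::field set \<Rightarrow> bool" where
  "is_subfield F = (0 \<in> F \<and> 1 \<in> F \<and> (\<forall>x\<in>F. \<forall>y\<in>F. x + y \<in> F \<and> x * y \<in> F) \<and>
     (\<forall>x\<in>F. - x \<in> F \<and> inverse x \<in> F))"

definition bcoords :: "'k::field set \<Rightarrow> 'k \<Rightarrow> 'k \<Rightarrow> 'k \<times> 'k" where
  "bcoords Fq \<tau> c = (THE p. fst p \<in> Fq \<and> snd p \<in> Fq \<and> c = fst p + snd p * \<tau>)"

text \<open>Formal arithmetic in R[tau]/(tau^2 - t1 tau - t0), with R = 'k (so the
  resulting polynomials can be evaluated at points of PG(4,q^2)).
  A pair (u,w) stands for u + w tau.\<close>

definition tadd :: "'k::field \<times> 'k \<Rightarrow> 'k \<times> 'k \<Rightarrow> 'k \<times> 'k" where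
  "tadd p r = (fst p + fst r, snd p + snd r)"

definition tmul :: "'k::field \<Rightarrow> 'k \<Rightarrow> 'k \<times> 'k \<Rightarrow> 'k \<times> 'k \<Rightarrow> 'k \<times> 'k" where
  "tmul t0 t1 p r = (fst p * fst r + t0 * snd p * snd r,
                     fst p * snd r + snd p * fst r + t1 * snd p * snd r)"

text \<open>Substituting x = x0 + x1 tau, y = y0 + y1 tau, z into f and reducing with
  tau^2 = t1 tau + t0 gives f = f_inf + tau f_0; bb_split returns (f_inf, f_0)
  evaluated at (x0,x1,y0,y1,z).\<close>

definition bb_split :: "'k::field set \<Rightarrow> 'k \<Rightarrow> 'k \<Rightarrow> 'k \<Rightarrow> 'k conic
     \<Rightarrow> 'k \<times> 'k \<times> 'k \<times> 'k \<times> 'k \<Rightarrow> 'k \<times> 'k" where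
  "bb_split Fq \<tau> t0 t1 C P = (case C of (a,b,c,d,e,g) \<Rightarrow> case P of (x0,x1,y0,y1,z) \<Rightarrow>
     let X = (x0,x1); Y = (y0,y1); Z = (z,0);
         m = tmul t0 t1; k = bcoords Fq \<tau>;
         mon = (\<lambda>co U V. m (k co) (m U V))
     in tadd (mon a X X) (tadd (mon b Y Y) (tadd (mon c Z Z)
          (tadd (mon d X Y) (tadd (mon e X Z) (mon g Y Z))))))"

definition f_inf where "f_inf Fq \<tau> t0 t1 C P = fst (bb_split Fq \<tau> t0 t1 C P)"
definition f_0 where "f_0 Fq \<tau> t0 t1 C P = snd (bb_split Fq \<tau> t0 t1 C P)"

text \<open>Spread line [L] of the point L = (l1,l2,0) of l_inf, given by two spanning
  vectors over GF(q).\<close>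

definition spread_gens :: "'k::field set \<Rightarrow> 'k \<Rightarrow> 'k \<Rightarrow> 'k \<Rightarrow> 'k \<Rightarrow> 'k
    \<Rightarrow> ('k \<times> 'k \<times> 'k \<times> 'k \<times> 'k) \<times> ('k \<times> 'k \<times> 'k \<times> 'k \<times> 'k)" where
  "spread_gens Fq \<tau> t0 t1 l1 l2 =
     (if l2 = 0 then ((1,0,0,0,0), (0,1,0,0,0))
      else (case bcoords Fq \<tau> (l1 / l2) of (d0,d1) \<Rightarrow>
              ((d0,d1,1,0,0), (t0*d1, d0 + t1*d1, 0, 1, 0))))"

text \<open>Extended spread line [L]^*: nonzero vectors of the GF(q^2)-span of the generators
  (representatives of the points of the extended line in PG(4,q^2)).\<close>

definition ext_spread_line :: "'k::field set \<Rightarrow> 'k \<Rightarrow> 'k \<Rightarrow> 'k \<Rightarrow> 'k \<Rightarrow> 'k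
    \<Rightarrow> ('k \<times> 'k \<times> 'k \<times> 'k \<times> 'k) set" where
  "ext_spread_line Fq \<tau> t0 t1 l1 l2 = (case spread_gens Fq \<tau> t0 t1 l1 l2 of
     ((u0,u1,u2,u3,u4),(w0,w1,w2,w3,w4)) \<Rightarrow>
       {(s*u0+r*w0, s*u1+r*w1, s*u2+r*w2, s*u3+r*w3, s*u4+r*w4) | s r. True}
       - {(0,0,0,0,0)})"

end

theory Submission
  imports Defs
begin

definition ev :: "'k::field \<Rightarrow> 'k \<times> 'k \<Rightarrow> 'k" where
  "ev \<rho> p = fst p + \<rho> * snd p"

lemma ev_tadd: "ev \<rho> (tadd p r) = ev \<rho> p + ev \<rho> r"
  by (simp add: ev_def tadd_def algebra_simps)

lemma ev_tmul:
  assumes "\<rho>^2 = t1*\<rho> + t0"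
  shows "ev \<rho> (tmul t0 t1 p r) = ev \<rho> p * ev \<rho> r"
proof -
  have "ev \<rho> p * ev \<rho> r = fst p * fst r + \<rho>*(fst p * snd r + snd p * fst r) + \<rho>^2 * snd p * snd r"
    by (simp add: ev_def algebra_simps power2_eq_square)
  also have "\<dots> = ev \<rho> (tmul t0 t1 p r)" unfolding assms
    by (simp add: ev_def tmul_def algebra_simps)
  finally show ?thesis by simp
qed

lemma ev_bb:
  assumes "\<rho>^2 = t1*\<rho> + t0"
  shows "f_inf Fq \<tau> t0 t1 (a,b,c,d,e,g) (x0,x1,y0,y1,z) + \<rho> * f_0 Fq \<tau> t0 t1 (a,b,c,d,e,g) (x0,x1,y0,y1,z)
    = (let K = (\<lambda>co. ev \<rho> (bcoords Fq \<tau> co)); X = x0 + \<rho>*x1; Y = y0 + \<rho>*y1 in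
       K a * (X*X) + K b * (Y*Y) + K c * (z*z) + K d * (X*Y) + K e * (X*z) + K g * (Y*z))" (is "_ = ?r")
proof -
  have "f_inf Fq \<tau> t0 t1 (a,b,c,d,e,g) (x0,x1,y0,y1,z) + \<rho> * f_0 Fq \<tau> t0 t1 (a,b,c,d,e,g) (x0,x1,y0,y1,z)
     = ev \<rho> (bb_split Fq \<tau> t0 t1 (a,b,c,d,e,g) (x0,x1,y0,y1,z))"
    by (simp add: f_inf_def f_0_def ev_def)
  also have "\<dots> = ?r"
    unfolding bb_split_def Let_def
    by (simp only: ev_tadd ev_tmul[OF assms] split prod.case) (simp add: ev_def)
  finally show ?thesis .
qed

lemma subf_pow: assumes "is_subfield Fq" "x \<in> Fq" shows "x^n \<in> Fq"
  using assms by (induction n) (auto simp: is_subfield_def)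

lemma subf_diff: assumes "is_subfield Fq" "x \<in> Fq" "y \<in> Fq" shows "x - y \<in> Fq"
proof -
  have "x + (- y) \<in> Fq" using assms unfolding is_subfield_def by blast
  thus ?thesis by simp
qed

lemma subf_div: assumes "is_subfield Fq" "x \<in> Fq" "y \<in> Fq" shows "x / y \<in> Fq"
proof -
  have "x * inverse y \<in> Fq" using assms unfolding is_subfield_def by blast
  thus ?thesis by (simp add: divide_inverse)
qed

lemma tau_notin:
  fixes Fq :: "'k::{field,finite} set"
  assumes sf: "is_subfield Fq" and cd: "card (UNIV :: 'k set) = (card Fq)^2"
    and pr: "\<forall>x::'k. x \<noteq> 0 \<longrightarrow> (\<exists>n::nat. x = \<tau>^n)"
  shows "\<tau> \<notin> Fq"
proof
  assume t: "\<tau> \<in> Fq"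
  have "UNIV \<subseteq> Fq"
  proof
    fix x :: 'k
    show "x \<in> Fq"
    proof (cases "x = 0")
      case True thus ?thesis using sf by (simp add: is_subfield_def)
    next
      case False then obtain n where "x = \<tau>^n" using pr by blast
      thus ?thesis using subf_pow[OF sf t] by simp
    qed
  qed
  hence "Fq = UNIV" by blast
  hence c: "card Fq = card Fq ^ 2" using cd by simp
  have "{0,1} \<subseteq> Fq" using sf by (simp add: is_subfield_def)
  hence "card {0::'k,1} \<le> card Fq" by (intro card_mono) auto
  hence "2 \<le> card Fq" by simp
  have "card Fq * 1 < card Fq * card Fq" using \<open>2 \<le> card Fq\<close> by (intro mult_strict_left_mono) auto
  with c show False by (simp add: power2_eq_square)
qed

lemma bcoords_ok:
  fixes Fq :: "'k::{field,finite} set"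
  assumes sf: "is_subfield Fq" and cd: "card (UNIV :: 'k set) = (card Fq)^2"
    and tn: "\<tau> \<notin> Fq"
  shows "fst (bcoords Fq \<tau> co) \<in> Fq \<and> snd (bcoords Fq \<tau> co) \<in> Fq \<and>
         co = fst (bcoords Fq \<tau> co) + snd (bcoords Fq \<tau> co) * \<tau>"
proof -
  define \<phi> where "\<phi> = (\<lambda>p::'k\<times>'k. fst p + snd p * \<tau>)"
  have inj: "inj_on \<phi> (Fq \<times> Fq)"
  proof (rule inj_onI)
    fix p r assume p: "p \<in> Fq \<times> Fq" and r: "r \<in> Fq \<times> Fq" and e: "\<phi> p = \<phi> r"
    show "p = r"
    proof (cases "snd p = snd r")
      case True thus ?thesis using e by (simp add: \<phi>_def prod_eq_iff)
    next
      case False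
      have "(snd p - snd r) * \<tau> = fst r - fst p" using e
        by (simp add: \<phi>_def algebra_simps)
      hence "\<tau> = (fst r - fst p) / (snd p - snd r)" using False
        by (simp add: field_simps)
      moreover have "(fst r - fst p) / (snd p - snd r) \<in> Fq"
        using p r by (intro subf_div[OF sf] subf_diff[OF sf]) auto
      ultimately show ?thesis using tn by simp
    qed
  qed
  have "card (\<phi> ` (Fq \<times> Fq)) = card (UNIV :: 'k set)"
    using card_image[OF inj] cd by (simp add: card_cartesian_product power2_eq_square)
  hence "\<phi> ` (Fq \<times> Fq) = UNIV" by (simp add: card_subset_eq)
  then obtain p where p: "p \<in> Fq \<times> Fq" "co = \<phi> p" by (metis UNIV_I imageE)
  have ex: "\<exists>!p. fst p \<in> Fq \<and> snd p \<in> Fq \<and> co = fst p + snd p * \<tau>"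
  proof
    show "fst p \<in> Fq \<and> snd p \<in> Fq \<and> co = fst p + snd p * \<tau>" using p by (auto simp: \<phi>_def)
  next
    fix r assume "fst r \<in> Fq \<and> snd r \<in> Fq \<and> co = fst r + snd r * \<tau>"
    thus "r = p" using inj p unfolding inj_on_def \<phi>_def by (metis mem_Times_iff)
  qed
  show ?thesis unfolding bcoords_def using theI'[OF ex] by blast
qed

lemma scale_E:
  assumes r: "\<rho>^2 = t1*\<rho> + t0"
    and hx: "x0 + \<rho>*x1 = m*(u0 + \<rho>*u1)" and hy: "y0 + \<rho>*y1 = m*(v0 + \<rho>*v1)" and hz: "z = m*w"
  shows "f_inf Fq \<tau> t0 t1 C (x0,x1,y0,y1,z) + \<rho> * f_0 Fq \<tau> t0 t1 C (x0,x1,y0,y1,z)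
     = m^2 * (f_inf Fq \<tau> t0 t1 C (u0,u1,v0,v1,w) + \<rho> * f_0 Fq \<tau> t0 t1 C (u0,u1,v0,v1,w))"
proof -
  obtain a b c d e g where C: "C = (a,b,c,d,e,g)" by (cases C) auto
  show ?thesis unfolding C ev_bb[OF r] Let_def hx hy hz
    by (simp add: algebra_simps power2_eq_square)
qed

definition inF :: "'k::field set \<Rightarrow> 'k \<times> 'k \<Rightarrow> bool" where
  "inF Fq p = (fst p \<in> Fq \<and> snd p \<in> Fq)"

lemma tmul_in: assumes "is_subfield Fq" "t0 \<in> Fq" "t1 \<in> Fq" "inF Fq p" "inF Fq r"
  shows "inF Fq (tmul t0 t1 p r)"
  using assms unfolding tmul_def is_subfield_def inF_def by simp

lemma tadd_in: assumes "is_subfield Fq" "inF Fq p" "inF Fq r"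
  shows "inF Fq (tadd p r)"
  using assms unfolding tadd_def is_subfield_def inF_def by simp

lemma bb_in:
  fixes Fq :: "'k::{field,finite} set"
  assumes sf: "is_subfield Fq" and cd: "card (UNIV :: 'k set) = (card Fq)^2"
    and tn: "\<tau> \<notin> Fq" and t: "t0 \<in> Fq" "t1 \<in> Fq"
    and P: "x0 \<in> Fq" "x1 \<in> Fq" "y0 \<in> Fq" "y1 \<in> Fq" "z \<in> Fq"
  shows "f_inf Fq \<tau> t0 t1 C (x0,x1,y0,y1,z) \<in> Fq \<and> f_0 Fq \<tau> t0 t1 C (x0,x1,y0,y1,z) \<in> Fq"
proof -
  obtain a b c d e g where C: "C = (a,b,c,d,e,g)" by (cases C) auto
  have bc: "inF Fq (bcoords Fq \<tau> co)" for co using bcoords_ok[OF sf cd tn] by (simp add: inF_def)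
  have z0: "0 \<in> Fq" using sf by (simp add: is_subfield_def)
  have X: "inF Fq (x0,x1)" "inF Fq (y0,y1)" "inF Fq (z,0)" using P z0 by (auto simp: inF_def)
  note M = tmul_in[OF sf t] and A = tadd_in[OF sf]
  have "inF Fq (bb_split Fq \<tau> t0 t1 C (x0,x1,y0,y1,z))"
    unfolding C bb_split_def Let_def split
    by (intro A M bc X)
  thus ?thesis by (simp add: inF_def f_inf_def f_0_def)
qed

lemma no_double:
  fixes Fq :: "'k::{field,finite} set"
  assumes sf: "is_subfield Fq" and tn: "\<tau> \<notin> Fq" and t: "t0 \<in> Fq" "t1 \<in> Fq"
    and r: "\<tau>^2 = t1*\<tau> + t0" and dbl: "2*\<tau> = t1"
  shows False
proof (cases "(2::'k) = 0")
  case False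
  have "(1::'k) + 1 \<in> Fq" using sf unfolding is_subfield_def by blast
  hence "t1 / 2 \<in> Fq" using subf_div[OF sf t(2), of "1+1"] by (simp add: one_add_one)
  moreover have "\<tau> = t1 / 2" using dbl False by (simp add: field_simps)
  ultimately show False using tn by metis
next
  case True
  have t10: "t1 = 0" using dbl True by simp
  have sq: "(x - y)^2 = x^2 - y^2" for x y :: 'k
  proof -
    have "(x-y)^2 = x^2 - y^2 - 2*y*(x-y)" by (simp add: algebra_simps power2_eq_square)
    thus ?thesis using True by simp
  qed
  have inj: "inj_on (\<lambda>x. x^2) Fq"
  proof (rule inj_onI)
    fix x y :: 'k assume "x^2 = y^2"
    hence "(x - y)^2 = 0" using sq by simp
    thus "x = y" by simp
  qed
  have sub: "(\<lambda>x. x^2) ` Fq \<subseteq> Fq" using subf_pow[OF sf] by auto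
  have "(\<lambda>x. x^2) ` Fq = Fq" by (rule endo_inj_surj[OF finite sub inj])
  then obtain c where c: "c \<in> Fq" "c^2 = t0" using t(1) by (metis imageE)
  have "(\<tau> - c)^2 = 0" using sq r t10 c by simp
  hence "\<tau> = c" by simp
  thus False using tn c by simp
qed

lemma scale_line:
  assumes r: "\<rho>^2 = t1*\<rho> + t0"
  shows "f_inf Fq \<tau> t0 t1 C (s*d0+r*(t0*d1), s*d1+r*(d0+t1*d1), s, r, 0)
     + \<rho> * f_0 Fq \<tau> t0 t1 C (s*d0+r*(t0*d1), s*d1+r*(d0+t1*d1), s, r, 0)
     = (s+\<rho>*r)^2 * (f_inf Fq \<tau> t0 t1 C (d0,d1,1,0,0) + \<rho> * f_0 Fq \<tau> t0 t1 C (d0,d1,1,0,0))"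
proof (rule scale_E[OF r])
  have "(s+\<rho>*r)*(d0+\<rho>*d1) = s*d0 + \<rho>*s*d1 + \<rho>*r*d0 + \<rho>^2*r*d1"
    by (simp add: algebra_simps power2_eq_square)
  also have "\<dots> = s*d0+r*(t0*d1) + \<rho>*(s*d1+r*(d0+t1*d1))" unfolding r by (simp add: algebra_simps)
  finally show "s*d0+r*(t0*d1) + \<rho>*(s*d1+r*(d0+t1*d1)) = (s+\<rho>*r)*(d0+\<rho>*d1)" by simp
qed simp_all

lemma scale_line0:
  assumes r: "\<rho>^2 = t1*\<rho> + t0"
  shows "f_inf Fq \<tau> t0 t1 C (s, r, 0, 0, 0)
     + \<rho> * f_0 Fq \<tau> t0 t1 C (s, r, 0, 0, 0)
     = (s+\<rho>*r)^2 * (f_inf Fq \<tau> t0 t1 C (1,0,0,0,0) + \<rho> * f_0 Fq \<tau> t0 t1 C (1,0,0,0,0))"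
  by (rule scale_E[OF r]) simp_all

theorem corollary4p4:
  fixes Fq :: "'k::{field,finite} set" and \<tau> t0 t1 l1 l2 :: 'k and C :: "'k conic"
  assumes "is_subfield Fq"
    and "card (UNIV :: 'k set) = (card Fq)^2"
    and "\<forall>x::'k. x \<noteq> 0 \<longrightarrow> (\<exists>n::nat. x = \<tau>^n)"
    and "t0 \<in> Fq" and "t1 \<in> Fq" and "\<tau>^2 = t1*\<tau> + t0"
    and "nondegenerate_conic C"
    and "(l1, l2) \<noteq> (0, 0)"
    and "conic_eval C l1 l2 0 \<noteq> 0"
  shows "\<forall>P \<in> ext_spread_line Fq \<tau> t0 t1 l1 l2.
           \<not> (f_inf Fq \<tau> t0 t1 C P = 0 \<and> f_0 Fq \<tau> t0 t1 C P = 0)"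
proof
  note sf = assms(1) and cd = assms(2) and rt = assms(6) and t = assms(4,5)
  have tn: "\<tau> \<notin> Fq" by (rule tau_notin[OF sf cd assms(3)])
  note bc = bcoords_ok[OF sf cd tn]
  have K: "ev \<tau> (bcoords Fq \<tau> co) = co" for co using bc[of co] by (simp add: ev_def mult.commute)
  obtain a b c d e g where C: "C = (a,b,c,d,e,g)" by (cases C) auto
  define E where "E = (\<lambda>\<rho> P. f_inf Fq \<tau> t0 t1 C P + \<rho> * f_0 Fq \<tau> t0 t1 C P)"
  define \<tau>' where "\<tau>' = t1 - \<tau>"
  have r': "\<tau>'^2 = t1*\<tau>' + t0" unfolding \<tau>'_def
  proof -
    have "(t1 - \<tau>)^2 = t1*t1 - 2*t1*\<tau> + \<tau>^2" by (simp add: algebra_simps power2_eq_square)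
    thus "(t1 - \<tau>)^2 = t1*(t1 - \<tau>) + t0" unfolding rt by (simp add: algebra_simps)
  qed
  have z0: "0 \<in> Fq" and o1: "1 \<in> Fq" using sf by (simp_all add: is_subfield_def)
  fix P assume P: "P \<in> ext_spread_line Fq \<tau> t0 t1 l1 l2"
  have "\<exists>Q s r. (fst Q \<in> Fq \<and> fst (snd Q) \<in> Fq \<and> fst (snd (snd Q)) \<in> Fq \<and>
          fst (snd (snd (snd Q))) \<in> Fq \<and> snd (snd (snd (snd Q))) \<in> Fq) \<and>
        E \<tau> Q \<noteq> 0 \<and> (s,r) \<noteq> (0,0) \<and>
        (\<forall>\<rho>. \<rho>^2 = t1*\<rho> + t0 \<longrightarrow> E \<rho> P = (s+\<rho>*r)^2 * E \<rho> Q)"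
  proof (cases "l2 = 0")
    case True
    have "P \<in> {(s*1+r*0, s*0+r*1, s*0+r*0, s*0+r*0, s*0+r*0) | s r. True} - {(0,0,0,0,0)}"
      using P True unfolding ext_spread_line_def spread_gens_def by simp
    then obtain s r where Pe: "P = (s*1+r*0, s*0+r*1, s*0+r*0, s*0+r*0, s*0+r*0)" and nz: "P \<noteq> (0,0,0,0,0)"
      by blast
    have l1: "l1 \<noteq> 0" using True assms(8) by simp
    have "E \<tau> (1,0,0,0,0) = a" unfolding E_def C ev_bb[OF rt] Let_def K by simp
    moreover have "conic_eval C l1 l2 0 = a * l1^2" using True by (simp add: C conic_eval_def)
    ultimately have "E \<tau> (1,0,0,0,0) \<noteq> 0" using assms(9) by auto
    moreover have "(s,r) \<noteq> (0,0)" using nz Pe by auto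
    moreover have "\<forall>\<rho>. \<rho>^2 = t1*\<rho> + t0 \<longrightarrow> E \<rho> P = (s+\<rho>*r)^2 * E \<rho> (1,0,0,0,0)"
    proof (intro allI impI)
      fix \<rho> :: 'k assume "\<rho>^2 = t1*\<rho> + t0"
      have Pe2: "P = (s, r, 0, 0, 0)" using Pe by simp
      show "E \<rho> P = (s+\<rho>*r)^2 * E \<rho> (1,0,0,0,0)" unfolding Pe2 E_def
        by (rule scale_line0) fact
    qed
    ultimately show ?thesis using z0 o1
      by (intro exI[of _ "(1,0,0,0,0)"]) (auto simp del: E_def)
  next
    case False
    obtain d0 d1 where dd: "bcoords Fq \<tau> (l1/l2) = (d0,d1)" by (cases "bcoords Fq \<tau> (l1/l2)") auto
    have dF: "d0 \<in> Fq" "d1 \<in> Fq" and del: "l1/l2 = d0 + d1*\<tau>" using bc[of "l1/l2"] dd by auto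
    have "P \<in> {(s*d0+r*(t0*d1), s*d1+r*(d0+t1*d1), s*1+r*0, s*0+r*1, s*0+r*0) | s r. True} - {(0,0,0,0,0)}"
      using P False dd unfolding ext_spread_line_def spread_gens_def by simp
    then obtain s r where Pe: "P = (s*d0+r*(t0*d1), s*d1+r*(d0+t1*d1), s*1+r*0, s*0+r*1, s*0+r*0)"
      and nz: "P \<noteq> (0,0,0,0,0)" by blast
    define \<delta> where "\<delta> = d0 + \<tau>*d1"
    have dl: "l1 = \<delta> * l2" unfolding \<delta>_def using del False by (simp add: field_simps)
    have "E \<tau> (d0,d1,1,0,0) = a*(\<delta>*\<delta>) + b + d*\<delta>"
      unfolding E_def C ev_bb[OF rt] Let_def K \<delta>_def by simp
    moreover have "conic_eval C l1 l2 0 = l2^2 * (a*(\<delta>*\<delta>) + b + d*\<delta>)"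
      unfolding dl by (simp add: C conic_eval_def algebra_simps power2_eq_square)
    ultimately have "E \<tau> (d0,d1,1,0,0) \<noteq> 0" using assms(9) by auto
    moreover have "(s,r) \<noteq> (0,0)" using nz Pe by auto
    moreover have "\<forall>\<rho>. \<rho>^2 = t1*\<rho> + t0 \<longrightarrow> E \<rho> P = (s+\<rho>*r)^2 * E \<rho> (d0,d1,1,0,0)"
    proof (intro allI impI)
      fix \<rho> :: 'k assume "\<rho>^2 = t1*\<rho> + t0"
      have Pe2: "P = (s*d0+r*(t0*d1), s*d1+r*(d0+t1*d1), s, r, 0)" using Pe by simp
      show "E \<rho> P = (s+\<rho>*r)^2 * E \<rho> (d0,d1,1,0,0)" unfolding Pe2 E_def
        by (rule scale_line) fact
    qed
    ultimately show ?thesis using z0 o1 dF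
      by (intro exI[of _ "(d0,d1,1,0,0)"]) (auto simp del: E_def)
  qed
  then obtain q0 q1 q2 q3 q4 s r where qF: "q0 \<in> Fq" "q1 \<in> Fq" "q2 \<in> Fq" "q3 \<in> Fq" "q4 \<in> Fq"
    and Eq: "E \<tau> (q0,q1,q2,q3,q4) \<noteq> 0" and sr: "(s,r) \<noteq> (0,0)"
    and sc: "\<And>\<rho>. \<rho>^2 = t1*\<rho> + t0 \<Longrightarrow> E \<rho> P = (s+\<rho>*r)^2 * E \<rho> (q0,q1,q2,q3,q4)"
    by fastforce
  define fi where "fi = f_inf Fq \<tau> t0 t1 C (q0,q1,q2,q3,q4)"
  define f0 where "f0 = f_0 Fq \<tau> t0 t1 C (q0,q1,q2,q3,q4)"
  have fF: "fi \<in> Fq" "f0 \<in> Fq" using bb_in[OF sf cd tn t qF] unfolding fi_def f0_def by auto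
  have Eq': "E \<tau>' (q0,q1,q2,q3,q4) \<noteq> 0"
  proof
    assume h: "E \<tau>' (q0,q1,q2,q3,q4) = 0"
    hence h': "fi + (t1 - \<tau>) * f0 = 0" unfolding E_def fi_def f0_def \<tau>'_def .
    show False
    proof (cases "f0 = 0")
      case True thus False using h' Eq by (simp add: E_def fi_def f0_def)
    next
      case False
      have "\<tau> = (fi + t1*f0) / f0" using h' False by (simp add: field_simps algebra_simps)
      moreover have "(fi + t1*f0) / f0 \<in> Fq" using fF t sf unfolding is_subfield_def
        by (intro subf_div[OF sf]) auto
      ultimately show False using tn by simp
    qed
  qed
  show "\<not> (f_inf Fq \<tau> t0 t1 C P = 0 \<and> f_0 Fq \<tau> t0 t1 C P = 0)"
  proof
    assume zz: "f_inf Fq \<tau> t0 t1 C P = 0 \<and> f_0 Fq \<tau> t0 t1 C P = 0"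
    have "E \<rho> P = 0" for \<rho> using zz by (simp add: E_def)
    hence m1: "s + \<tau>*r = 0" and m2: "s + \<tau>'*r = 0" using sc[OF rt] sc[OF r'] Eq Eq' by auto
    have "r * (2*\<tau> - t1) = (s + \<tau>*r) - (s + \<tau>'*r)" unfolding \<tau>'_def by (simp add: algebra_simps)
    hence "r * (2*\<tau> - t1) = 0" using m1 m2 by simp
    moreover have "r \<noteq> 0" using sr m1 by auto
    ultimately have "2*\<tau> = t1" by simp
    thus False by (rule no_double[OF sf tn t rt])
  qed
qed

end
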